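(* Let $\mathbb{A},\mathbb{B}$ be real square matrices of the same size such that $\mathbb{A}$ is a non-singular symmetric matrix with exactly one negative eigenvalue and $\mathbb{A}\mathbb{B}$ is skew-symmetric. Then $\mathbb{A}+\mathbb{B}$ is invertible and has exactly one negative eigenvalue, whose geometric multiplicity is $1$. *)

theory Defs
  imports "Jordan_Normal_Form.Jordan_Normal_Form_Uniqueness"
begin

definition neg_eig_count :: "real mat \<Rightarrow> nat" where
  "neg_eig_count A = (\<Sum>k \<in> {k. eigenvalue A k \<and> k < 0}. Polynomial.order k (char_poly A))"

definition geom_mult :: "real mat \<Rightarrow> real \<Rightarrow> nat" where
  "geom_mult A k = dim_gen_eigenspace A k 1"

end

theory Submission
  imports Defs "HOL-Analysis.Function_Topology"
begin


definition ip :: "nat \<Rightarrow> (nat \<Rightarrow> real) \<Rightarrow> (nat \<Rightarrow> real) \<Rightarrow> real" where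
  "ip n f g = (\<Sum>i<n. f i * g i)"

definition av :: "nat \<Rightarrow> real mat \<Rightarrow> (nat \<Rightarrow> real) \<Rightarrow> nat \<Rightarrow> real" where
  "av n A f = (\<lambda>i. \<Sum>j<n. A $$ (i,j) * f j)"

definition rs :: "nat \<Rightarrow> (nat \<Rightarrow> real) \<Rightarrow> nat \<Rightarrow> real" where
  "rs n f = (\<lambda>i. if i < n then f i else 0)"

lemma ip_rs[simp]: "ip n (rs n f) g = ip n f g" "ip n g (rs n f) = ip n g f"
  unfolding ip_def rs_def by (auto intro!: sum.cong)

lemma av_rs[simp]: "av n A (rs n f) = av n A f"
  unfolding av_def rs_def by (auto intro!: sum.cong)

lemma ip_comm: "ip n f g = ip n g f" unfolding ip_def by (simp add: mult.commute)

lemma ip_nonneg: "ip n f f \<ge> 0" unfolding ip_def by (auto intro: sum_nonneg)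

lemma ip_zero: "ip n f f = 0 \<Longrightarrow> i < n \<Longrightarrow> f i = 0"
  unfolding ip_def by (subst (asm) sum_nonneg_eq_0_iff) auto

lemma ip_comp_le: assumes "i < n" shows "(f i)^2 \<le> ip n f f"
proof -
  have "(f i)^2 = (\<Sum>j\<in>{i}. f j * f j)" by (simp add: power2_eq_square)
  also have "\<dots> \<le> ip n f f" unfolding ip_def
    by (rule sum_mono2) (use assms in auto)
  finally show ?thesis .
qed

lemma cont_ip: "continuous_on UNIV (\<lambda>f::nat\<Rightarrow>real. ip n f g)"
  unfolding ip_def by (intro continuous_intros continuous_on_product_coordinates)

lemma cont_ip2: "continuous_on UNIV (\<lambda>f::nat\<Rightarrow>real. ip n f f)"
  unfolding ip_def by (intro continuous_intros continuous_on_product_coordinates)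

lemma cont_q: "continuous_on UNIV (\<lambda>f::nat\<Rightarrow>real. ip n f (av n A f))"
  unfolding ip_def av_def by (intro continuous_intros continuous_on_product_coordinates)

lemma compact_box: "compact (Pi UNIV (\<lambda>i. if i < n then {-1..1::real} else {0}))"
proof -
  have "Pi UNIV (\<lambda>i. if i < n then {-1..1::real} else {0}) = PiE UNIV (\<lambda>i. if i < n then {-1..1::real} else {0})"
    by (simp add: PiE_def)
  moreover have "compactin (product_topology (\<lambda>i. euclidean) UNIV) (PiE UNIV (\<lambda>i. if i < n then {-1..1::real} else {0}))"
    by (subst compactin_PiE) auto
  ultimately show ?thesis using euclidean_product_topology by (metis compactin_euclidean_iff)
qed

lemma min_exists:
  assumes "\<exists>f. ip n f f = 1 \<and> (\<forall>m<k. ip n f (U m) = 0)"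
  shows "\<exists>u. ip n u u = 1 \<and> (\<forall>m<k. ip n u (U m) = 0) \<and>
     (\<forall>f. ip n f f = 1 \<and> (\<forall>m<k. ip n f (U m) = 0) \<longrightarrow> ip n u (av n A u) \<le> ip n f (av n A f))"
proof -
  define S where "S = Pi UNIV (\<lambda>i. if i < n then {-1..1::real} else {0}) \<inter> {f. ip n f f = 1}
     \<inter> (\<Inter>m\<in>{..<k}. {f. ip n f (U m) = 0})"
  have cS: "compact S" unfolding S_def
    by (intro compact_Int_closed compact_box closed_INT ballI closed_Collect_eq cont_ip cont_ip2 continuous_on_const)
  from assms obtain f where f: "ip n f f = 1" "\<forall>m<k. ip n f (U m) = 0" by blast
  have rsS: "rs n g \<in> S" if "ip n g g = 1" "\<forall>m<k. ip n g (U m) = 0" for g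
  proof -
    have "rs n g i \<in> {-1..1}" if "i < n" for i
    proof -
      have "(g i)^2 \<le> 1" using ip_comp_le[OF \<open>i<n\<close>, of g] \<open>ip n g g = 1\<close> by simp
      then have "\<bar>g i\<bar> \<le> 1" by (simp add: abs_square_le_1)
      then show ?thesis using that by (auto simp: rs_def)
    qed
    then have "rs n g \<in> Pi UNIV (\<lambda>i. if i < n then {-1..1::real} else {0})"
      by (auto simp: rs_def)
    moreover have "ip n (rs n g) (rs n g) = 1" "\<forall>m<k. ip n (rs n g) (U m) = 0" using that by simp_all
    ultimately show ?thesis unfolding S_def by blast
  qed
  have ne: "S \<noteq> {}" using rsS[OF f] by blast
  have cq: "continuous_on S (\<lambda>f. ip n f (av n A f))"
    using cont_q continuous_on_subset subset_UNIV by blast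
  obtain u where u: "u \<in> S" and min: "\<And>y. y \<in> S \<Longrightarrow> ip n u (av n A u) \<le> ip n y (av n A y)"
    using continuous_attains_inf[OF cS ne cq] by blast
  show ?thesis
  proof (intro exI conjI allI impI)
    show "ip n u u = 1" "\<And>m. m < k \<Longrightarrow> ip n u (U m) = 0" using u unfolding S_def by auto
    fix g assume g: "ip n g g = 1 \<and> (\<forall>m<k. ip n g (U m) = 0)"
    have "ip n u (av n A u) \<le> ip n (rs n g) (av n A (rs n g))" using min rsS g by blast
    then show "ip n u (av n A u) \<le> ip n g (av n A g)" by simp
  qed
qed



lemma ip_lin_left: "ip n (\<lambda>i. a * f i + b * g i) h = a * ip n f h + b * ip n g h"
  unfolding ip_def by (simp add: algebra_simps sum.distrib sum_distrib_left)

lemma ip_lin_right: "ip n h (\<lambda>i. a * f i + b * g i) = a * ip n h f + b * ip n h g"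
  unfolding ip_def by (simp add: algebra_simps sum.distrib sum_distrib_left)

lemma ip_scale_left: "ip n (\<lambda>i. a * f i) h = a * ip n f h"
  unfolding ip_def by (simp add: algebra_simps sum_distrib_left)

lemma ip_scale_right: "ip n h (\<lambda>i. a * f i) = a * ip n h f"
  unfolding ip_def by (simp add: algebra_simps sum_distrib_left)

lemma av_lin: "av n A (\<lambda>i. a * f i + b * g i) = (\<lambda>i. a * av n A f i + b * av n A g i)"
  unfolding av_def by (simp add: algebra_simps sum.distrib sum_distrib_left)

lemma av_scale: "av n A (\<lambda>i. a * f i) = (\<lambda>i. a * av n A f i)"
  unfolding av_def by (simp add: algebra_simps sum_distrib_left)

lemma ip_cong_right: "(\<And>i. i < n \<Longrightarrow> f i = g i) \<Longrightarrow> ip n h f = ip n h g"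
  unfolding ip_def by (auto intro!: sum.cong)

lemma ip_cong_left: "(\<And>i. i < n \<Longrightarrow> f i = g i) \<Longrightarrow> ip n f h = ip n g h"
  unfolding ip_def by (auto intro!: sum.cong)

lemma ip_av_sym: assumes "\<forall>i<n. \<forall>j<n. A $$ (i,j) = A $$ (j,i)"
  shows "ip n f (av n A g) = ip n (av n A f) g"
proof -
  have "ip n f (av n A g) = (\<Sum>i<n. \<Sum>j<n. f i * A $$ (i,j) * g j)"
    unfolding ip_def av_def by (simp add: sum_distrib_left mult.assoc)
  also have "\<dots> = (\<Sum>j<n. \<Sum>i<n. f i * A $$ (i,j) * g j)" by (rule sum.swap)
  also have "\<dots> = (\<Sum>j<n. (\<Sum>i<n. A $$ (j,i) * f i) * g j)"
    unfolding sum_distrib_right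
  proof (rule sum.cong[OF refl], rule sum.cong[OF refl])
    fix j i assume "j \<in> {..<n}" "i \<in> {..<n}"
    then have "A $$ (i,j) = A $$ (j,i)" using assms by auto
    then show "f i * A $$ (i, j) * g j = A $$ (j, i) * f i * g j" by simp
  qed
  also have "\<dots> = ip n (av n A f) g" unfolding ip_def av_def ..
  finally show ?thesis .
qed

lemma ip_zero_left: assumes "ip n f f = 0" shows "ip n f g = 0"
proof -
  have "\<forall>i\<in>{..<n}. f i * g i = 0" using ip_zero[OF assms] by simp
  then show ?thesis unfolding ip_def by (rule sum.neutral)
qed

lemma av_zero: "ip n f f = 0 \<Longrightarrow> ip n f (av n A f) = 0"
  using ip_zero_left by blast

lemma quad_zero: fixes p b :: real assumes "\<forall>t. 2*t*p + t^2 * b \<ge> 0" shows "p = 0"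
proof (rule ccontr)
  assume p: "p \<noteq> 0"
  define c where "c = \<bar>b\<bar> + 1"
  have c: "c > 0" "\<bar>b\<bar> \<le> c" unfolding c_def by auto
  define t where "t = - p / c"
  have "2*t*p = - 2 * p^2 / c" unfolding t_def by (simp add: power2_eq_square)
  moreover have "t^2 * b \<le> t^2 * c" using c by (intro mult_left_mono) auto
  moreover have "t^2 * c = p^2 / c" unfolding t_def using c by (simp add: power2_eq_square field_simps)
  moreover have "p^2 / c > 0" using p c by auto
  ultimately have "2*t*p + t^2 * b < 0" by (simp add: field_simps)
  with assms show False by (meson not_le)
qed

lemma lagrange:
  assumes sym: "\<forall>i<n. \<forall>j<n. A $$ (i,j) = A $$ (j,i)"
    and eig: "\<forall>m<k. \<forall>i<n. av n A (U m) i = d m * U m i"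
    and u1: "ip n u u = 1" and uo: "\<forall>m<k. ip n u (U m) = 0"
    and min: "\<forall>f. ip n f f = 1 \<and> (\<forall>m<k. ip n f (U m) = 0) \<longrightarrow> ip n u (av n A u) \<le> ip n f (av n A f)"
  shows "\<forall>i<n. av n A u i = ip n u (av n A u) * u i"
proof -
  define q where "q f = ip n f (av n A f)" for f
  have qz: "q z \<ge> q u * ip n z z" if z: "\<forall>m<k. ip n z (U m) = 0" for z
  proof (cases "ip n z z = 0")
    case True
    then show ?thesis unfolding q_def using av_zero[OF True] by simp
  next
    case False
    then have pos: "ip n z z > 0" using ip_nonneg[of n z] by linarith
    define c where "c = 1 / sqrt (ip n z z)"
    have c2: "c * c = 1 / ip n z z" unfolding c_def using pos
      by (simp add: real_sqrt_mult[symmetric])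
    define z' where "z' = (\<lambda>i. c * z i)"
    have "ip n z' z' = c * c * ip n z z" unfolding z'_def by (simp add: ip_scale_left ip_scale_right)
    also have "\<dots> = 1" using c2 pos by simp
    finally have 1: "ip n z' z' = 1" .
    have 2: "\<forall>m<k. ip n z' (U m) = 0" unfolding z'_def using z by (simp add: ip_scale_left)
    have "q u \<le> q z'" using min 1 2 unfolding q_def by blast
    also have "q z' = c * c * q z" unfolding q_def z'_def by (simp add: av_scale ip_scale_left ip_scale_right)
    finally have "q u \<le> q z / ip n z z" using c2 by simp
    then show ?thesis using pos by (simp add: field_simps)
  qed
  have stat: "ip n u (av n A w) = 0" if w: "\<forall>m<k. ip n w (U m) = 0" and uw: "ip n u w = 0" for w
  proof -
    have wu: "ip n w u = 0" using uw ip_comm by metis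
    have sy: "ip n w (av n A u) = ip n u (av n A w)"
      using ip_av_sym[OF sym, of w u] ip_comm by metis
    have "\<forall>t. 2*t*ip n u (av n A w) + t^2 * (q w - q u * ip n w w) \<ge> 0"
    proof
      fix t
      define z where "z = (\<lambda>i. 1 * u i + t * w i)"
      have zo: "\<forall>m<k. ip n z (U m) = 0" unfolding z_def ip_lin_left using uo w by simp
      have "ip n z z = 1 + t^2 * ip n w w" unfolding z_def ip_lin_left ip_lin_right
        by (simp add: u1 uw wu power2_eq_square)
      moreover have "q z = q u + 2 * t * ip n u (av n A w) + t^2 * q w"
        unfolding z_def q_def av_lin ip_lin_left ip_lin_right
        by (simp add: sy power2_eq_square algebra_simps)
      ultimately show "2*t*ip n u (av n A w) + t^2 * (q w - q u * ip n w w) \<ge> 0"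
        using qz[OF zo] by (simp add: algebra_simps)
    qed
    then show ?thesis by (rule quad_zero)
  qed
  define w where "w = (\<lambda>i. 1 * av n A u i + (- q u) * u i)"
  have wo: "\<forall>m<k. ip n w (U m) = 0"
  proof (intro allI impI)
    fix m assume m: "m < k"
    have "ip n (av n A u) (U m) = ip n u (av n A (U m))" using ip_av_sym[OF sym] by metis
    also have "\<dots> = ip n u (\<lambda>i. d m * U m i)" using eig m by (intro ip_cong_right) auto
    also have "\<dots> = 0" using uo m by (simp add: ip_scale_right)
    finally show "ip n w (U m) = 0" unfolding w_def ip_lin_left using uo m by simp
  qed
  have uw: "ip n u w = 0" unfolding w_def ip_lin_right by (simp add: u1 q_def)
  have "ip n u (av n A w) = 0" by (rule stat[OF wo uw])
  then have "ip n (av n A u) w = 0" using ip_av_sym[OF sym] by metis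
  moreover have "ip n (av n A u) w = ip n w w"
  proof -
    have "ip n w w = 1 * ip n (av n A u) w + (- q u) * ip n u w" unfolding w_def by (simp only: ip_lin_left)
    then show ?thesis using uw by simp
  qed
  ultimately have "ip n w w = 0" by simp
  then have "\<forall>i<n. w i = 0" using ip_zero by blast
  then show ?thesis unfolding w_def q_def by simp
qed

lemma ip_unit_left: "j < n \<Longrightarrow> ip n (\<lambda>l. if l = j then 1 else 0) g = g j"
proof -
  assume j: "j < n"
  have "ip n (\<lambda>l. if l = j then 1 else 0) g = (\<Sum>i<n. if i = j then g i else 0)"
    unfolding ip_def by (intro sum.cong) auto
  also have "\<dots> = g j" using j by simp
  finally show ?thesis .
qed

lemma perp_exists:
  assumes kn: "k < n" and orth: "\<forall>m<k. \<forall>m'<k. ip n (U m) (U m') = (if m = m' then 1 else 0)"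
  shows "\<exists>f. ip n f f = 1 \<and> (\<forall>m<k. ip n f (U m) = 0)"
proof -
  define w where "w j = (\<lambda>l. (if l = j then 1 else 0) - (\<Sum>m<k. U m j * U m l))" for j
  have ipw: "ip n (w j) g = g j - (\<Sum>m<k. U m j * ip n (U m) g)" if "j < n" for j g
  proof -
    have "ip n (w j) g = ip n (\<lambda>l. if l = j then 1 else 0) g - (\<Sum>i<n. \<Sum>m<k. U m j * U m i * g i)"
      unfolding w_def ip_def by (simp add: algebra_simps sum_subtractf sum_distrib_right sum_distrib_left)
    also have "(\<Sum>i<n. \<Sum>m<k. U m j * U m i * g i) = (\<Sum>m<k. U m j * ip n (U m) g)"
      unfolding ip_def by (subst sum.swap) (simp add: sum_distrib_left mult.assoc)
    finally show ?thesis using ip_unit_left[OF that] by simp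
  qed
  have wo: "ip n (w j) (U m') = 0" if "j < n" "m' < k" for j m'
  proof -
    have "(\<Sum>m<k. U m j * ip n (U m) (U m')) = (\<Sum>m<k. if m = m' then U m j else 0)"
      using orth that by (intro sum.cong) auto
    also have "\<dots> = U m' j" using that by simp
    finally show ?thesis using ipw[OF that(1)] by simp
  qed
  have "\<exists>j<n. ip n (w j) (w j) \<noteq> 0"
  proof (rule ccontr)
    assume "\<not> ?thesis"
    then have "\<forall>j<n. w j j = 0" using ip_zero by blast
    then have "\<forall>j<n. (\<Sum>m<k. (U m j)^2) = 1" unfolding w_def by (simp add: power2_eq_square)
    then have "(\<Sum>j<n. \<Sum>m<k. (U m j)^2) = (\<Sum>j<n. 1::real)" by simp
    also have "\<dots> = real n" by simp
    finally have "real n = (\<Sum>m<k. \<Sum>j<n. (U m j)^2)" by (subst (asm) sum.swap) simp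
    also have "\<dots> = (\<Sum>m<k. ip n (U m) (U m))" unfolding ip_def by (simp add: power2_eq_square)
    also have "\<dots> = (\<Sum>m<k. 1)" using orth by simp
    finally show False using kn by simp
  qed
  then obtain j where j: "j < n" "ip n (w j) (w j) \<noteq> 0" by blast
  then have pos: "ip n (w j) (w j) > 0" using ip_nonneg[of n "w j"] by linarith
  define c where "c = 1 / sqrt (ip n (w j) (w j))"
  have c2: "c * c = 1 / ip n (w j) (w j)" unfolding c_def using pos
    by (simp add: real_sqrt_mult[symmetric])
  show ?thesis
  proof (intro exI conjI allI impI)
    show "ip n (\<lambda>i. c * w j i) (\<lambda>i. c * w j i) = 1" unfolding ip_scale_left ip_scale_right
      using c2 pos by (simp add: mult.assoc[symmetric])
    fix m assume "m < k"
    then show "ip n (\<lambda>i. c * w j i) (U m) = 0" unfolding ip_scale_left using wo j by simp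
  qed
qed

lemma orth_eig_exists:
  assumes sym: "\<forall>i<n. \<forall>j<n. A $$ (i,j) = A $$ (j,i)" and "k \<le> n"
  shows "\<exists>U d. (\<forall>m<k. \<forall>m'<k. ip n (U m) (U m') = (if m = m' then 1 else 0)) \<and>
     (\<forall>m<k. \<forall>i<n. av n A (U m) i = d m * U m i)"
  using \<open>k \<le> n\<close>
proof (induction k)
  case 0
  then show ?case by simp
next
  case (Suc k)
  then obtain U d where orth: "\<forall>m<k. \<forall>m'<k. ip n (U m) (U m') = (if m = m' then 1 else 0)"
    and eig: "\<forall>m<k. \<forall>i<n. av n A (U m) i = d m * U m i" by auto
  from perp_exists[of k n U] orth Suc.prems have "\<exists>f. ip n f f = 1 \<and> (\<forall>m<k. ip n f (U m) = 0)" by simp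
  from min_exists[OF this, of A] obtain u where u1: "ip n u u = 1" and uo: "\<forall>m<k. ip n u (U m) = 0"
    and min: "\<forall>f. ip n f f = 1 \<and> (\<forall>m<k. ip n f (U m) = 0) \<longrightarrow> ip n u (av n A u) \<le> ip n f (av n A f)"
    by blast
  from lagrange[OF sym eig u1 uo min] have ue: "\<forall>i<n. av n A u i = ip n u (av n A u) * u i" .
  define U' where "U' = U(k := u)"
  define d' where "d' = d(k := ip n u (av n A u))"
  show ?case
  proof (intro exI[of _ U'] exI[of _ d'] conjI allI impI)
    fix m m' assume m: "m < Suc k" and m': "m' < Suc k"
    show "ip n (U' m) (U' m') = (if m = m' then 1 else 0)"
    proof (cases "m = k"; cases "m' = k")
      assume "m = k" "m' \<noteq> k"
      then show ?thesis using uo m' unfolding U'_def by auto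
    next
      assume "m \<noteq> k" "m' = k"
      then show ?thesis using uo m ip_comm[of n "U m" u] unfolding U'_def by auto
    next
      assume "m \<noteq> k" "m' \<noteq> k"
      then show ?thesis using orth m m' unfolding U'_def by auto
    qed (use u1 U'_def in auto)
  next
    fix m i assume m: "m < Suc k" and i: "i < n"
    show "av n A (U' m) i = d' m * U' m i"
      using m i eig ue unfolding U'_def d'_def by (cases "m = k") auto
  qed
qed



lemma spectral:
  fixes A :: "real mat"
  assumes A: "A \<in> carrier_mat n n" and sA: "transpose_mat A = A"
  shows "\<exists>W d. W \<in> carrier_mat n n \<and> W * transpose_mat W = 1\<^sub>m n \<and> transpose_mat W * W = 1\<^sub>m n \<and>
     A = W * mat n n (\<lambda>(i,j). if i = j then d i else 0) * transpose_mat W"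
proof -
  have sym: "\<forall>i<n. \<forall>j<n. A $$ (i,j) = A $$ (j,i)"
  proof (intro allI impI)
    fix i j assume "i < n" "j < n"
    then show "A $$ (i,j) = A $$ (j,i)" using arg_cong[OF sA, of "\<lambda>M. M $$ (j,i)"] A by auto
  qed
  from orth_eig_exists[OF sym, of n] obtain U d
    where orth: "\<forall>m<n. \<forall>m'<n. ip n (U m) (U m') = (if m = m' then 1 else 0)"
    and eig: "\<forall>m<n. \<forall>i<n. av n A (U m) i = d m * U m i" by blast
  define W where "W = mat n n (\<lambda>(i,j). U j i)"
  define D where "D = mat n n (\<lambda>(i,j). if i = j then d i else (0::real))"
  have W: "W \<in> carrier_mat n n" and Wt: "transpose_mat W \<in> carrier_mat n n"
    and D: "D \<in> carrier_mat n n" unfolding W_def D_def by auto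
  have WtW: "transpose_mat W * W = 1\<^sub>m n"
  proof (rule eq_matI)
    fix i j assume i: "i < dim_row (1\<^sub>m n)" and j: "j < dim_col (1\<^sub>m n)"
    then have "(transpose_mat W * W) $$ (i,j) = ip n (U i) (U j)"
      unfolding W_def ip_def by (auto simp: scalar_prod_def intro!: sum.cong)
    then show "(transpose_mat W * W) $$ (i,j) = 1\<^sub>m n $$ (i,j)" using orth i j by auto
  qed (use W in auto)
  have WWt: "W * transpose_mat W = 1\<^sub>m n" by (rule mat_mult_left_right_inverse[OF Wt W WtW])
  have AW: "A * W = W * D"
  proof (rule eq_matI)
    fix i j assume i: "i < dim_row (W * D)" and j: "j < dim_col (W * D)"
    then have ij: "i < n" "j < n" using W D by auto
    have "(A * W) $$ (i,j) = av n A (U j) i"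
      using A ij unfolding W_def av_def by (auto simp: scalar_prod_def intro!: sum.cong)
    also have "\<dots> = d j * U j i" using eig ij by auto
    also have "\<dots> = (W * D) $$ (i,j)"
    proof -
      have "(W * D) $$ (i,j) = (\<Sum>l<n. U l i * (if l = j then d j else 0))"
        using ij unfolding W_def D_def by (auto simp: scalar_prod_def lessThan_atLeast0 intro!: sum.cong)
      also have "\<dots> = (\<Sum>l<n. if l = j then U j i * d j else 0)" by (intro sum.cong) auto
      also have "\<dots> = d j * U j i" using ij by simp
      finally show ?thesis by simp
    qed
    finally show "(A * W) $$ (i,j) = (W * D) $$ (i,j)" .
  qed (use A W D in auto)
  have "A = A * (W * transpose_mat W)" using A WWt by simp
  also have "\<dots> = (A * W) * transpose_mat W" using A W Wt by (simp add: assoc_mult_mat)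
  also have "\<dots> = W * D * transpose_mat W" unfolding AW ..
  finally show ?thesis using W WWt WtW unfolding D_def by blast
qed

lemma order_prod_linear: fixes d :: "nat \<Rightarrow> real"
  shows "Polynomial.order k (\<Prod>j\<leftarrow>[0..<m]. [:-d j, 1:]) = card {j. j < m \<and> d j = k}"
proof (induction m)
  case 0
  then show ?case by (simp add: order_0I)
next
  case (Suc m)
  have nz: "(\<Prod>j\<leftarrow>[0..<m]. [:-d j, 1:]) \<noteq> 0" by (auto simp: prod_list_zero_iff)
  have nz1: "[:-d m, 1:] \<noteq> 0" by simp
  have nz2: "(\<Prod>j\<leftarrow>[0..<m]. [:-d j, 1:]) * [:-d m, 1:] \<noteq> 0" using nz nz1 by (rule no_zero_divisors)
  have "{j. j < Suc m \<and> d j = k} = {j. j < m \<and> d j = k} \<union> (if d m = k then {m} else {})" by (auto simp: less_Suc_eq)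
  then have c: "card {j. j < Suc m \<and> d j = k} = card {j. j < m \<and> d j = k} + (if d m = k then 1 else 0)"
    by auto
  show ?case unfolding upt_Suc_append[OF le0] map_append prod_list.append c Suc.IH[symmetric]
    using order_mult[OF nz2, of k] by (simp add: order_linear')
qed

lemma index_one:
  fixes A :: "real mat"
  assumes A: "A \<in> carrier_mat n n" and sA: "transpose_mat A = A" and dA: "det A \<noteq> 0"
    and neg: "neg_eig_count A = 1"
  shows "det A < 0 \<and> (\<forall>x\<in>carrier_vec n. \<forall>y\<in>carrier_vec n. \<exists>a b. (a \<noteq> 0 \<or> b \<noteq> 0) \<and>
     (a \<cdot>\<^sub>v x + b \<cdot>\<^sub>v y) \<bullet> (A *\<^sub>v (a \<cdot>\<^sub>v x + b \<cdot>\<^sub>v y)) \<ge> 0)"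
proof -
  from spectral[OF A sA] obtain W d where W: "W \<in> carrier_mat n n" and WWt: "W * transpose_mat W = 1\<^sub>m n"
    and WtW: "transpose_mat W * W = 1\<^sub>m n"
    and AD: "A = W * mat n n (\<lambda>(i,j). if i = j then d i else 0) * transpose_mat W" by blast
  define D where "D = mat n n (\<lambda>(i,j). if i = j then d i else (0::real))"
  have D: "D \<in> carrier_mat n n" unfolding D_def by simp
  have Wt: "transpose_mat W \<in> carrier_mat n n" using W by simp
  have AD': "A = W * D * transpose_mat W" using AD unfolding D_def .
  have utD: "upper_triangular D" unfolding D_def upper_triangular_def by auto
  have diagD: "diag_mat D = map d [0..<n]" unfolding D_def diag_mat_def by auto
  have "similar_mat_wit A D W (transpose_mat W)" unfolding similar_mat_wit_def Let_def
    using A W Wt D WWt WtW AD' by auto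
  then have sim: "similar_mat A D" unfolding similar_mat_def by blast
  have cp: "char_poly A = (\<Prod>j\<leftarrow>[0..<n]. [:-d j, 1:])"
    unfolding char_poly_similar[OF sim] char_poly_upper_triangular[OF D utD] diagD
    by (simp add: comp_def)
  have eig: "eigenvalue A k \<longleftrightarrow> (\<exists>j<n. d j = k)" for k
    unfolding eigenvalue_root_char_poly[OF A] cp poly_prod_list prod_list_zero_iff by auto
  define J where "J = {j. j < n \<and> d j < 0}"
  have finJ: "finite J" unfolding J_def by auto
  have seteq: "{k. eigenvalue A k \<and> k < 0} = d ` J" unfolding eig J_def by auto
  have "card J = (\<Sum>y\<in>d ` J. card {x. x \<in> J \<and> d x = y})"
    using sum.image_gen[OF finJ, of "\<lambda>_. 1::nat" d] by simp
  also have "\<dots> = (\<Sum>y\<in>d ` J. Polynomial.order y (char_poly A))"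
    unfolding cp order_prod_linear J_def by (intro sum.cong refl arg_cong[where f = card]) auto
  also have "\<dots> = 1" using neg unfolding neg_eig_count_def seteq .
  finally obtain j0 where J: "J = {j0}" using card_1_singletonE by blast
  have j0: "j0 < n" "d j0 < 0" using J unfolding J_def by auto
  have others: "d j \<ge> 0" if "j < n" "j \<noteq> j0" for j
    using J that unfolding J_def by (metis (mono_tags, lifting) linorder_not_le mem_Collect_eq singletonD)
  have "det A = det W * det D * det (transpose_mat W)"
    unfolding AD' using W D Wt by (simp add: det_mult)
  also have "\<dots> = det D * (det W * det (transpose_mat W))" by simp
  also have "det W * det (transpose_mat W) = 1" using det_mult[OF W Wt] WWt by simp
  also have "det D = prod_list (map d [0..<n])" unfolding det_upper_triangular[OF utD D] diagD ..
  also have "\<dots> = (\<Prod>j\<in>{..<n}. d j)" by (simp add: prod.distinct_set_conv_list[symmetric] atLeast0LessThan)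
  also have "\<dots> = d j0 * (\<Prod>j\<in>{..<n} - {j0}. d j)" using j0 by (simp add: prod.remove)
  finally have detA: "det A = d j0 * (\<Prod>j\<in>{..<n} - {j0}. d j)" by simp
  have "(\<Prod>j\<in>{..<n} - {j0}. d j) \<ge> 0" using others by (intro prod_nonneg) auto
  moreover have "(\<Prod>j\<in>{..<n} - {j0}. d j) \<noteq> 0" using dA detA by (metis mult_zero_right)
  ultimately have "(\<Prod>j\<in>{..<n} - {j0}. d j) > 0" by linarith
  then have "det A < 0" using detA j0 mult_neg_pos by metis
  have quad: "z \<bullet> (A *\<^sub>v z) = (\<Sum>j<n. d j * ((transpose_mat W *\<^sub>v z) $ j)^2)" if z: "z \<in> carrier_vec n" for z
  proof -
    define y where "y = transpose_mat W *\<^sub>v z"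
    have y: "y \<in> carrier_vec n" unfolding y_def using Wt z by simp
    have WD: "W * D \<in> carrier_mat n n" using W D by simp
    have "A *\<^sub>v z = (W * D) *\<^sub>v y" unfolding AD' y_def by (rule assoc_mult_mat_vec[OF WD Wt z])
    also have "\<dots> = W *\<^sub>v (D *\<^sub>v y)" by (rule assoc_mult_mat_vec[OF W D y])
    finally have "A *\<^sub>v z = W *\<^sub>v (D *\<^sub>v y)" .
    then have "z \<bullet> (A *\<^sub>v z) = y \<bullet> (D *\<^sub>v y)"
      using transpose_vec_mult_scalar[OF W, of "D *\<^sub>v y" z] y D z unfolding y_def by simp
    also have "\<dots> = (\<Sum>j<n. y $ j * (\<Sum>l<n. D $$ (j,l) * y $ l))"
      using y D by (simp add: scalar_prod_def lessThan_atLeast0 mult_mat_vec_def)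
    also have "\<dots> = (\<Sum>j<n. d j * (y $ j)^2)"
    proof (intro sum.cong refl)
      fix j assume j: "j \<in> {..<n}"
      have "(\<Sum>l<n. D $$ (j,l) * y $ l) = (\<Sum>l<n. if l = j then d j * y $ j else 0)"
        using j unfolding D_def by (intro sum.cong) auto
      also have "\<dots> = d j * y $ j" using j by simp
      finally show "y $ j * (\<Sum>l<n. D $$ (j,l) * y $ l) = d j * (y $ j)^2" by (simp add: power2_eq_square)
    qed
    finally show ?thesis unfolding y_def .
  qed
  have K1: "\<exists>a b. (a \<noteq> 0 \<or> b \<noteq> 0) \<and> (a \<cdot>\<^sub>v x + b \<cdot>\<^sub>v y) \<bullet> (A *\<^sub>v (a \<cdot>\<^sub>v x + b \<cdot>\<^sub>v y)) \<ge> 0"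
    if x: "x \<in> carrier_vec n" and y: "y \<in> carrier_vec n" for x y
  proof -
    define cx where "cx = (transpose_mat W *\<^sub>v x) $ j0"
    define cy where "cy = (transpose_mat W *\<^sub>v y) $ j0"
    obtain a b where ab: "a \<noteq> 0 \<or> b \<noteq> 0" and abz: "a * cx + b * cy = 0"
    proof (cases "cy = 0 \<and> cx = 0")
      case True
      then show ?thesis using that[of 1 0] by simp
    next
      case False
      then show ?thesis using that[of cy "- cx"] by (auto simp: algebra_simps)
    qed
    define z where "z = a \<cdot>\<^sub>v x + b \<cdot>\<^sub>v y"
    have z: "z \<in> carrier_vec n" unfolding z_def using x y by simp
    have "transpose_mat W *\<^sub>v z = a \<cdot>\<^sub>v (transpose_mat W *\<^sub>v x) + b \<cdot>\<^sub>v (transpose_mat W *\<^sub>v y)"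
      unfolding z_def using Wt x y by (simp add: mult_add_distrib_mat_vec mult_mat_vec)
    then have cz: "(transpose_mat W *\<^sub>v z) $ j0 = 0" using abz j0 Wt x y unfolding cx_def cy_def by simp
    have "z \<bullet> (A *\<^sub>v z) = (\<Sum>j<n. d j * ((transpose_mat W *\<^sub>v z) $ j)^2)" by (rule quad[OF z])
    also have "\<dots> \<ge> 0"
    proof (intro sum_nonneg)
      fix j assume j: "j \<in> {..<n}"
      show "d j * ((transpose_mat W *\<^sub>v z) $ j)^2 \<ge> 0"
        using others[of j] j cz by (cases "j = j0") auto
    qed
    finally show ?thesis using ab unfolding z_def by blast
  qed
  show ?thesis using \<open>det A < 0\<close> K1 by blast
qed



lemma self_scalar_zero: fixes x :: "real vec"
  assumes x: "x \<in> carrier_vec n" and z: "x \<bullet> x = 0" shows "x = 0\<^sub>v n"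
proof (rule eq_vecI)
  have "(\<Sum>i<n. x $ i * x $ i) = 0" using z x by (simp add: scalar_prod_def lessThan_atLeast0)
  then have "\<forall>i\<in>{..<n}. x $ i * x $ i = 0" by (subst (asm) sum_nonneg_eq_0_iff) auto
  then show "\<And>i. i < dim_vec (0\<^sub>v n) \<Longrightarrow> x $ i = 0\<^sub>v n $ i" by simp
qed (use x in simp)

lemma self_scalar_nonneg: fixes x :: "real vec" shows "x \<bullet> x \<ge> 0"
  by (simp add: scalar_prod_def sum_nonneg)

lemma skew_zero: fixes C :: "real mat"
  assumes C: "C \<in> carrier_mat n n" and sk: "transpose_mat C = - C" and x: "x \<in> carrier_vec n"
  shows "x \<bullet> (C *\<^sub>v x) = 0"
proof -
  have "(transpose_mat C *\<^sub>v x) \<bullet> x = x \<bullet> (C *\<^sub>v x)" by (rule transpose_vec_mult_scalar[OF C x x])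
  moreover have "(transpose_mat C *\<^sub>v x) \<bullet> x = - ((C *\<^sub>v x) \<bullet> x)"
    unfolding sk using C x by (simp add: scalar_prod_def mult_mat_vec_def sum_negf)
  moreover have "(C *\<^sub>v x) \<bullet> x = x \<bullet> (C *\<^sub>v x)" using C x by (simp add: comm_scalar_prod[of _ n])
  ultimately show ?thesis by linarith
qed

lemma key_identity: fixes A B :: "real mat"
  assumes A: "A \<in> carrier_mat n n" and B: "B \<in> carrier_mat n n" and sA: "transpose_mat A = A"
    and sk: "transpose_mat (A * B) = - (A * B)" and x: "x \<in> carrier_vec n"
  shows "x \<bullet> (A *\<^sub>v ((A + B) *\<^sub>v x)) = (A *\<^sub>v x) \<bullet> (A *\<^sub>v x)"
proof -
  have AB: "A * B \<in> carrier_mat n n" using A B by simp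
  have "(A + B) *\<^sub>v x = A *\<^sub>v x + B *\<^sub>v x" using A B x by (simp add: add_mult_distrib_mat_vec)
  then have "A *\<^sub>v ((A + B) *\<^sub>v x) = A *\<^sub>v (A *\<^sub>v x) + (A * B) *\<^sub>v x"
    using A B x by (simp add: mult_add_distrib_mat_vec)
  then have "x \<bullet> (A *\<^sub>v ((A + B) *\<^sub>v x)) = x \<bullet> (A *\<^sub>v (A *\<^sub>v x)) + x \<bullet> ((A * B) *\<^sub>v x)"
    using A B x by (simp add: scalar_prod_add_distrib[of _ n])
  also have "x \<bullet> ((A * B) *\<^sub>v x) = 0" by (rule skew_zero[OF AB sk x])
  also have "x \<bullet> (A *\<^sub>v (A *\<^sub>v x)) = (A *\<^sub>v x) \<bullet> (A *\<^sub>v x)"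
    using transpose_vec_mult_scalar[OF A, of "A *\<^sub>v x" x] A x sA by simp
  finally show ?thesis by simp
qed

lemma A_inj: fixes A :: "real mat"
  assumes A: "A \<in> carrier_mat n n" and dA: "det A \<noteq> 0" and x: "x \<in> carrier_vec n"
    and z: "A *\<^sub>v x = 0\<^sub>v n" shows "x = 0\<^sub>v n"
  using det_0_iff_vec_prod_zero[OF A] dA x z by blast

lemma nonsing: fixes A B :: "real mat"
  assumes A: "A \<in> carrier_mat n n" and B: "B \<in> carrier_mat n n" and sA: "transpose_mat A = A"
    and dA: "det A \<noteq> 0" and sk: "transpose_mat (A * B) = - (A * B)"
  shows "det (A + B) \<noteq> 0"
proof
  assume "det (A + B) = 0"
  then obtain x where x: "x \<in> carrier_vec n" "x \<noteq> 0\<^sub>v n" "(A + B) *\<^sub>v x = 0\<^sub>v n"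
    using det_0_iff_vec_prod_zero[of "A + B" n] A B by auto
  have "(A *\<^sub>v x) \<bullet> (A *\<^sub>v x) = x \<bullet> (A *\<^sub>v 0\<^sub>v n)"
    using key_identity[OF A B sA sk x(1)] x(3) by simp
  also have "\<dots> = 0" using A x by (simp add: scalar_prod_def mult_mat_vec_def)
  finally have "A *\<^sub>v x = 0\<^sub>v n" using self_scalar_zero[of "A *\<^sub>v x" n] A x(1) by simp
  then show False using A_inj[OF A dA x(1)] x(2) by simp
qed

lemma det_mat_cont: "continuous_on UNIV (\<lambda>t::real. det (mat n n (\<lambda>ij. a ij + t * b ij)))"
proof -
  have "det (mat n n (\<lambda>ij. a ij + t * b ij)) =
    (\<Sum>p\<in>{p. p permutes {0..<n}}. signof p * (\<Prod>i = 0..<n. a (i, p i) + t * b (i, p i)))" for t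
    unfolding det_def'[OF mat_carrier]
    by (intro sum.cong refl arg_cong2[where f = "(*)"] prod.cong) (auto simp: permutes_in_image)
  then show ?thesis by (simp only:) (intro continuous_intros)
qed

lemma detM_neg: fixes A B :: "real mat"
  assumes A: "A \<in> carrier_mat n n" and B: "B \<in> carrier_mat n n" and sA: "transpose_mat A = A"
    and dA: "det A \<noteq> 0" and sk: "transpose_mat (A * B) = - (A * B)" and neg: "det A < 0"
  shows "det (A + B) < 0"
proof -
  define f where "f t = det (mat n n (\<lambda>ij. A $$ ij + t * B $$ ij))" for t :: real
  have F: "mat n n (\<lambda>ij. A $$ ij + t * B $$ ij) = A + t \<cdot>\<^sub>m B" for t
    by (rule eq_matI) (use A B in auto)
  have e: "(A * B) $$ (j,i) = - (A * B) $$ (i,j)" if "i < n" "j < n" for i j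
    using arg_cong[OF sk, of "\<lambda>M. M $$ (i,j)"] that A B by simp
  have sk': "transpose_mat (A * (t \<cdot>\<^sub>m B)) = - (A * (t \<cdot>\<^sub>m B))" for t
  proof -
    have "A * (t \<cdot>\<^sub>m B) = t \<cdot>\<^sub>m (A * B)" by (rule mult_smult_distrib[OF A B])
    moreover have "transpose_mat (t \<cdot>\<^sub>m (A * B)) = - (t \<cdot>\<^sub>m (A * B))"
    proof (rule eq_matI)
      fix i j assume "i < dim_row (- (t \<cdot>\<^sub>m (A * B)))" "j < dim_col (- (t \<cdot>\<^sub>m (A * B)))"
      then have ij: "i < n" "j < n" using A B by auto
      have ee: "(A * B) $$ (j,i) = - (A * B) $$ (i,j)" by (rule e[OF ij])
      show "transpose_mat (t \<cdot>\<^sub>m (A * B)) $$ (i, j) = (- (t \<cdot>\<^sub>m (A * B))) $$ (i, j)"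
        using ij A B by (simp add: ee)
    qed (use A B in auto)
    ultimately show ?thesis by simp
  qed
  have nz: "f t \<noteq> 0" for t
    unfolding f_def F using nonsing[OF A _ sA dA sk'[of t]] B by simp
  have cont: "continuous_on {0..1} f" unfolding f_def
    using det_mat_cont[of n "\<lambda>ij. A $$ ij" "\<lambda>ij. B $$ ij"] continuous_on_subset by blast
  have "mat n n (\<lambda>ij. A $$ ij + 0 * B $$ ij) = A" by (rule eq_matI) (use A in auto)
  then have f0: "f 0 = det A" unfolding f_def by simp
  have "mat n n (\<lambda>ij. A $$ ij + 1 * B $$ ij) = A + B" by (rule eq_matI) (use A B in auto)
  then have f1: "f 1 = det (A + B)" unfolding f_def by simp
  show ?thesis
  proof (rule ccontr)
    assume "\<not> ?thesis"
    then have "f 0 \<le> 0" "0 \<le> f 1" using f0 f1 neg by auto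
    from IVT'[OF this _ cont] nz show False by auto
  qed
qed

lemma neg_eig_exists: fixes M :: "real mat"
  assumes M: "M \<in> carrier_mat n n" and neg: "det M < 0"
  shows "\<exists>k<0. eigenvalue M k"
proof -
  define g where "g s = det (mat n n (\<lambda>ij. 1\<^sub>m n $$ ij + s * (M $$ ij - 1\<^sub>m n $$ ij)))" for s :: real
  have cont: "continuous_on {0..1} g" unfolding g_def
    using det_mat_cont[of n "\<lambda>ij. 1\<^sub>m n $$ ij" "\<lambda>ij. M $$ ij - 1\<^sub>m n $$ ij"] continuous_on_subset by blast
  have "mat n n (\<lambda>ij. 1\<^sub>m n $$ ij + 0 * (M $$ ij - 1\<^sub>m n $$ ij)) = 1\<^sub>m n"
    by (rule eq_matI) auto
  then have g0: "g 0 = 1" unfolding g_def by simp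
  have "mat n n (\<lambda>ij. 1\<^sub>m n $$ ij + 1 * (M $$ ij - 1\<^sub>m n $$ ij)) = M"
    by (rule eq_matI) (use M in auto)
  then have g1: "g 1 = det M" unfolding g_def by simp
  have "g 1 \<le> 0" "0 \<le> g 0" using g0 g1 neg by auto
  from IVT2'[OF this _ cont] obtain s where s: "0 \<le> s" "s \<le> 1" "g s = 0" by auto
  have s0: "s \<noteq> 0" using s g0 by auto
  have s1: "s \<noteq> 1" using s g1 neg by auto
  define k where "k = (s - 1) / s"
  have k: "k < 0" unfolding k_def using s s0 s1 by (simp add: divide_neg_pos)
  have "mat n n (\<lambda>ij. 1\<^sub>m n $$ ij + s * (M $$ ij - 1\<^sub>m n $$ ij)) = s \<cdot>\<^sub>m char_matrix M k"
  proof (rule eq_matI)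
    fix i j assume ij: "i < dim_row (s \<cdot>\<^sub>m char_matrix M k)" "j < dim_col (s \<cdot>\<^sub>m char_matrix M k)"
    then have ij': "i < n" "j < n" using M by (auto simp: char_matrix_def)
    show "mat n n (\<lambda>ij. 1\<^sub>m n $$ ij + s * (M $$ ij - 1\<^sub>m n $$ ij)) $$ (i, j) = (s \<cdot>\<^sub>m char_matrix M k) $$ (i, j)"
      using ij' M s0 unfolding char_matrix_def k_def by (auto simp: field_simps)
  qed (use M in \<open>auto simp: char_matrix_def\<close>)
  then have "s ^ n * det (char_matrix M k) = 0" using s(3) M unfolding g_def by (simp add: char_matrix_def)
  then have "det (char_matrix M k) = 0" using s0 by simp
  then have "eigenvalue M k" using eigenvalue_det[OF M] by simp
  then show ?thesis using k by blast
qed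

lemma mv_lin: fixes A :: "real mat"
  assumes A: "A \<in> carrier_mat n n" and x: "x \<in> carrier_vec n" and y: "y \<in> carrier_vec n"
  shows "A *\<^sub>v (p \<cdot>\<^sub>v x + q \<cdot>\<^sub>v y) = p \<cdot>\<^sub>v (A *\<^sub>v x) + q \<cdot>\<^sub>v (A *\<^sub>v y)"
  using A x y by (simp add: mult_add_distrib_mat_vec[OF A] mult_mat_vec[OF A])

lemma bilin: fixes A :: "real mat"
  assumes A: "A \<in> carrier_mat n n" and x: "x \<in> carrier_vec n" and y: "y \<in> carrier_vec n"
  shows "(s \<cdot>\<^sub>v x + t \<cdot>\<^sub>v y) \<bullet> (A *\<^sub>v (p \<cdot>\<^sub>v x + q \<cdot>\<^sub>v y)) =
    s * p * (x \<bullet> (A *\<^sub>v x)) + s * q * (x \<bullet> (A *\<^sub>v y)) + t * p * (y \<bullet> (A *\<^sub>v x)) + t * q * (y \<bullet> (A *\<^sub>v y))"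
proof -
  have Ax: "A *\<^sub>v x \<in> carrier_vec n" and Ay: "A *\<^sub>v y \<in> carrier_vec n" using A x y by auto
  have "(s \<cdot>\<^sub>v x + t \<cdot>\<^sub>v y) \<bullet> (p \<cdot>\<^sub>v (A *\<^sub>v x) + q \<cdot>\<^sub>v (A *\<^sub>v y)) =
    (s \<cdot>\<^sub>v x) \<bullet> (p \<cdot>\<^sub>v (A *\<^sub>v x) + q \<cdot>\<^sub>v (A *\<^sub>v y)) + (t \<cdot>\<^sub>v y) \<bullet> (p \<cdot>\<^sub>v (A *\<^sub>v x) + q \<cdot>\<^sub>v (A *\<^sub>v y))"
    by (rule add_scalar_prod_distrib[of _ n]) (use x y Ax Ay in auto)
  also have "\<dots> = (s \<cdot>\<^sub>v x) \<bullet> (p \<cdot>\<^sub>v (A *\<^sub>v x)) + (s \<cdot>\<^sub>v x) \<bullet> (q \<cdot>\<^sub>v (A *\<^sub>v y))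
     + ((t \<cdot>\<^sub>v y) \<bullet> (p \<cdot>\<^sub>v (A *\<^sub>v x)) + (t \<cdot>\<^sub>v y) \<bullet> (q \<cdot>\<^sub>v (A *\<^sub>v y)))"
    by (subst scalar_prod_add_distrib[of _ n], (use x y Ax Ay in auto)[3],
        subst scalar_prod_add_distrib[of _ n], (use x y Ax Ay in auto)[3]) simp
  also have "\<dots> = s * p * (x \<bullet> (A *\<^sub>v x)) + s * q * (x \<bullet> (A *\<^sub>v y)) + t * p * (y \<bullet> (A *\<^sub>v x)) + t * q * (y \<bullet> (A *\<^sub>v y))"
    using x y Ax Ay by simp
  finally show ?thesis using mv_lin[OF A x y] by simp
qed

lemma kernel_dim_one:
  fixes C :: "real mat"
  assumes C: "C \<in> carrier_mat n n" and x0: "x0 \<in> mat_kernel C" "x0 \<noteq> 0\<^sub>v n"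
    and dep: "\<forall>v \<in> mat_kernel C. \<exists>c. v = c \<cdot>\<^sub>v x0"
  shows "kernel_dim C = 1"
proof -
  interpret K: kernel n n C by unfold_locales (rule C)
  have x0c: "x0 \<in> carrier_vec n" using x0 mat_kernelD[OF C] by auto
  have gen: "K.Ker.span {x0} = mat_kernel C"
  proof
    show "K.Ker.span {x0} \<subseteq> mat_kernel C" using K.Ker.span_is_subset2 x0 by auto
    show "mat_kernel C \<subseteq> K.Ker.span {x0}"
    proof
      fix v assume "v \<in> mat_kernel C"
      then obtain c where v: "v = c \<cdot>\<^sub>v x0" using dep by blast
      have "K.Ker.lincomb (\<lambda>_. c) {x0} = c \<cdot>\<^sub>v x0" unfolding K.Ker.lincomb_def using x0 by auto
      then have l: "v = K.Ker.lincomb (\<lambda>_. c) {x0}" using v by simp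
      have "{x0} \<subseteq> mat_kernel C" using x0 by simp
      have sp: "K.Ker.span {x0} = {K.Ker.lincomb a {x0} | a. a \<in> ({x0} \<rightarrow> UNIV)}"
        by (rule K.Ker.finite_span[OF _ \<open>{x0} \<subseteq> mat_kernel C\<close>]) simp
      have "(\<lambda>_. c) \<in> ({x0} \<rightarrow> UNIV)" by simp
      then show "v \<in> K.Ker.span {x0}" unfolding sp l by blast
    qed
  qed
  have ex: "finite {x0} \<and> card {x0} = 1 \<and> {x0} \<subseteq> mat_kernel C \<and> K.Ker.span {x0} = mat_kernel C"
    using gen x0 by simp
  have "K.Ker.dim \<le> 1" unfolding K.Ker.dim_def
    by (rule Least_le) (rule exI[of _ "{x0}"], rule ex)
  moreover have "K.Ker.dim \<noteq> 0"
  proof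
    assume "K.Ker.dim = 0"
    have "\<exists>S. finite S \<and> card S = K.Ker.dim \<and> S \<subseteq> mat_kernel C \<and> K.Ker.span S = mat_kernel C"
      unfolding K.Ker.dim_def by (rule LeastI_ex) (use ex in blast)
    then obtain S where S: "finite S" "card S = 0" "S \<subseteq> mat_kernel C" "K.Ker.span S = mat_kernel C"
      using \<open>K.Ker.dim = 0\<close> by auto
    then have "S = {}" by simp
    then have "mat_kernel C = {0\<^sub>v n}" using S K.Ker.span_empty by simp
    then show False using x0 by simp
  qed
  ultimately show ?thesis by simp
qed



lemma real_contra: fixes a b c l m al be :: real
  assumes a: "a < 0" and b: "b < 0" and l: "l < 0" and m: "m < 0" and lm: "l \<noteq> m"
    and disc: "4*l*m*a*b \<ge> (l+m)^2*c^2" and ab: "al \<noteq> 0 \<or> be \<noteq> 0"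
    and Q: "al^2*a + 2*al*be*c + be^2*b \<ge> 0"
  shows False
proof (cases "c = 0")
  case True
  have "al^2*a \<le> 0" "be^2*b \<le> 0" using a b by (auto simp: mult_nonneg_nonpos)
  moreover have "al^2*a < 0 \<or> be^2*b < 0" using ab a b by (auto simp: mult_pos_neg)
  ultimately show False using Q True by auto
next
  case False
  have c2: "c^2 > 0" using False by simp
  have "(l-m)^2 > 0" using lm by simp
  then have "(l-m)^2*c^2 > 0" using c2 by simp
  moreover have "(l+m)^2*c^2 - 4*l*m*c^2 = (l-m)^2*c^2" by (simp add: power2_eq_square algebra_simps)
  ultimately have "(l+m)^2*c^2 > 4*l*m*c^2" by linarith
  then have "4*l*m*(a*b) > 4*l*m*c^2" using disc by (simp add: mult.assoc)
  moreover have "4*l*m > 0" using l m by (simp add: mult_neg_neg)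
  ultimately have "a*b > c^2" using mult_less_cancel_left_pos[of "4*l*m" "c^2" "a*b"] by simp
  then have D: "a*b - c^2 > 0" by simp
  have id: "a * (al^2*a + 2*al*be*c + be^2*b) = (a*al + c*be)^2 + (a*b - c^2)*be^2"
    by (simp add: power2_eq_square algebra_simps)
  show False
  proof (cases "be = 0")
    case True
    then have "al \<noteq> 0" using ab by simp
    then have "al^2*a < 0" using a by (simp add: mult_pos_neg)
    then show False using Q True by simp
  next
    case False
    then have "(a*b - c^2)*be^2 > 0" using D by simp
    then have "a * (al^2*a + 2*al*be*c + be^2*b) > 0" unfolding id
      by (intro add_nonneg_pos) simp_all
    then have "al^2*a + 2*al*be*c + be^2*b < 0" using a by (simp add: zero_less_mult_iff)
    then show False using Q by simp
  qed
qed

lemma eig_quad: fixes A B :: "real mat"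
  assumes A: "A \<in> carrier_mat n n" and B: "B \<in> carrier_mat n n" and sA: "transpose_mat A = A"
    and sk: "transpose_mat (A * B) = - (A * B)" and x: "x \<in> carrier_vec n"
    and Mx: "(A + B) *\<^sub>v x = l \<cdot>\<^sub>v x"
  shows "l * (x \<bullet> (A *\<^sub>v x)) = (A *\<^sub>v x) \<bullet> (A *\<^sub>v x)"
proof -
  have "x \<bullet> (A *\<^sub>v ((A + B) *\<^sub>v x)) = l * (x \<bullet> (A *\<^sub>v x))"
    unfolding Mx using A x by (simp add: mult_mat_vec[OF A])
  then show ?thesis using key_identity[OF A B sA sk x] by simp
qed

lemma Ax_pos: fixes A :: "real mat"
  assumes A: "A \<in> carrier_mat n n" and dA: "det A \<noteq> 0" and x: "x \<in> carrier_vec n" and x0: "x \<noteq> 0\<^sub>v n"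
  shows "(A *\<^sub>v x) \<bullet> (A *\<^sub>v x) > 0"
proof -
  have "A *\<^sub>v x \<noteq> 0\<^sub>v n" using A_inj[OF A dA x] x0 by blast
  then have "(A *\<^sub>v x) \<bullet> (A *\<^sub>v x) \<noteq> 0" using self_scalar_zero[of "A *\<^sub>v x" n] A x by auto
  then show ?thesis using self_scalar_nonneg[of "A *\<^sub>v x"] by linarith
qed

lemma uniq_neg: fixes A B :: "real mat"
  assumes A: "A \<in> carrier_mat n n" and B: "B \<in> carrier_mat n n" and sA: "transpose_mat A = A"
    and dA: "det A \<noteq> 0" and sk: "transpose_mat (A * B) = - (A * B)"
    and K1: "\<forall>x\<in>carrier_vec n. \<forall>y\<in>carrier_vec n. \<exists>a b. (a \<noteq> 0 \<or> b \<noteq> 0) \<and>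
     (a \<cdot>\<^sub>v x + b \<cdot>\<^sub>v y) \<bullet> (A *\<^sub>v (a \<cdot>\<^sub>v x + b \<cdot>\<^sub>v y)) \<ge> 0"
    and l: "eigenvalue (A + B) l" "l < 0" and m: "eigenvalue (A + B) m" "m < 0"
  shows "l = m"
proof (rule ccontr)
  assume lm: "l \<noteq> m"
  define M where "M = A + B"
  have M: "M \<in> carrier_mat n n" unfolding M_def using A B by simp
  obtain x where "eigenvector M x l" using l(1) unfolding eigenvalue_def M_def by blast
  then have x: "x \<in> carrier_vec n" "x \<noteq> 0\<^sub>v n" "M *\<^sub>v x = l \<cdot>\<^sub>v x" unfolding eigenvector_def using M by auto
  obtain y where "eigenvector M y m" using m(1) unfolding eigenvalue_def M_def by blast
  then have y: "y \<in> carrier_vec n" "y \<noteq> 0\<^sub>v n" "M *\<^sub>v y = m \<cdot>\<^sub>v y" unfolding eigenvector_def using M by auto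
  define a where "a = x \<bullet> (A *\<^sub>v x)"
  define b where "b = y \<bullet> (A *\<^sub>v y)"
  define c where "c = x \<bullet> (A *\<^sub>v y)"
  have c': "y \<bullet> (A *\<^sub>v x) = c"
  proof -
    have "(transpose_mat A *\<^sub>v y) \<bullet> x = y \<bullet> (A *\<^sub>v x)" by (rule transpose_vec_mult_scalar[OF A x(1) y(1)])
    then have "y \<bullet> (A *\<^sub>v x) = (A *\<^sub>v y) \<bullet> x" using sA by simp
    also have "\<dots> = x \<bullet> (A *\<^sub>v y)" using A x y by (simp add: comm_scalar_prod[of _ n])
    finally show ?thesis unfolding c_def .
  qed
  have la: "l * a > 0" unfolding a_def using eig_quad[OF A B sA sk x(1)] x(3) Ax_pos[OF A dA x(1,2)]
    unfolding M_def by simp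
  have mb: "m * b > 0" unfolding b_def using eig_quad[OF A B sA sk y(1)] y(3) Ax_pos[OF A dA y(1,2)]
    unfolding M_def by simp
  have a: "a < 0" using la l(2) by (simp add: zero_less_mult_iff)
  have b: "b < 0" using mb m(2) by (simp add: zero_less_mult_iff)
  have Q: "s * (s * l) * a + s * (t * m) * c + t * (s * l) * c + t * (t * m) * b \<ge> 0" for s t
  proof -
    define z where "z = s \<cdot>\<^sub>v x + t \<cdot>\<^sub>v y"
    have z: "z \<in> carrier_vec n" unfolding z_def using x y by simp
    have Mz: "M *\<^sub>v z = (s * l) \<cdot>\<^sub>v x + (t * m) \<cdot>\<^sub>v y"
      unfolding z_def mv_lin[OF M x(1) y(1)] x(3) y(3) by (simp add: smult_smult_assoc)
    have "z \<bullet> (A *\<^sub>v (M *\<^sub>v z)) = (A *\<^sub>v z) \<bullet> (A *\<^sub>v z)"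
      unfolding M_def by (rule key_identity[OF A B sA sk z])
    also have "\<dots> \<ge> 0" by (rule self_scalar_nonneg)
    finally have "z \<bullet> (A *\<^sub>v (M *\<^sub>v z)) \<ge> 0" .
    then show ?thesis unfolding Mz unfolding z_def bilin[OF A x(1) y(1)] a_def b_def c_def c' .
  qed
  have "(-(l+m)*c) * ((-(l+m)*c) * l) * a + (-(l+m)*c) * ((2*l*a) * m) * c + (2*l*a) * ((-(l+m)*c) * l) * c
     + (2*l*a) * ((2*l*a) * m) * b = (l * a) * (4*l*m*a*b - (l+m)^2*c^2)"
    by (simp add: power2_eq_square algebra_simps)
  then have "(l * a) * (4*l*m*a*b - (l+m)^2*c^2) \<ge> 0" using Q[of "-(l+m)*c" "2*l*a"] by simp
  then have disc: "4*l*m*a*b \<ge> (l+m)^2*c^2" using la by (simp add: zero_le_mult_iff)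
  obtain al be where ab: "al \<noteq> 0 \<or> be \<noteq> 0"
    and q: "(al \<cdot>\<^sub>v x + be \<cdot>\<^sub>v y) \<bullet> (A *\<^sub>v (al \<cdot>\<^sub>v x + be \<cdot>\<^sub>v y)) \<ge> 0"
    using K1 x(1) y(1) by blast
  have "al^2*a + 2*al*be*c + be^2*b \<ge> 0" using q unfolding bilin[OF A x(1) y(1)] a_def b_def c_def c'
    by (simp add: power2_eq_square algebra_simps)
  from real_contra[OF a b l(2) m(2) lm disc ab this] show False .
qed

lemma geom_one: fixes A B :: "real mat"
  assumes A: "A \<in> carrier_mat n n" and B: "B \<in> carrier_mat n n" and sA: "transpose_mat A = A"
    and dA: "det A \<noteq> 0" and sk: "transpose_mat (A * B) = - (A * B)"
    and K1: "\<forall>x\<in>carrier_vec n. \<forall>y\<in>carrier_vec n. \<exists>a b. (a \<noteq> 0 \<or> b \<noteq> 0) \<and>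
     (a \<cdot>\<^sub>v x + b \<cdot>\<^sub>v y) \<bullet> (A *\<^sub>v (a \<cdot>\<^sub>v x + b \<cdot>\<^sub>v y)) \<ge> 0"
    and l: "eigenvalue (A + B) l" "l < 0"
  shows "geom_mult (A + B) l = 1"
proof -
  define M where "M = A + B"
  have M: "M \<in> carrier_mat n n" unfolding M_def using A B by simp
  define C where "C = char_matrix M l"
  have C: "C \<in> carrier_mat n n" unfolding C_def using M by simp
  have C1: "C ^\<^sub>m 1 = C" using C by (simp add: One_nat_def)
  have ker: "v \<in> carrier_vec n \<and> M *\<^sub>v v = l \<cdot>\<^sub>v v" if v: "v \<in> mat_kernel C" for v
  proof -
    have vc: "v \<in> carrier_vec n" and Cv: "C *\<^sub>v v = 0\<^sub>v n" using mat_kernelD[OF C v] by auto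
    show ?thesis
    proof (cases "v = 0\<^sub>v n")
      case True
      then show ?thesis using M by auto
    next
      case False
      then have "eigenvector M v l" using eigenvector_char_matrix[OF M] vc Cv unfolding C_def by auto
      then show ?thesis unfolding eigenvector_def using M by auto
    qed
  qed
  obtain x0 where "eigenvector M x0 l" using l(1) unfolding eigenvalue_def M_def by blast
  then have x0: "x0 \<in> carrier_vec n" "x0 \<noteq> 0\<^sub>v n" "C *\<^sub>v x0 = 0\<^sub>v n"
    using eigenvector_char_matrix[OF M] unfolding C_def by auto
  have x0k: "x0 \<in> mat_kernel C" by (rule mat_kernelI[OF C x0(1) x0(3)])
  have dep: "\<forall>v \<in> mat_kernel C. \<exists>c. v = c \<cdot>\<^sub>v x0"
  proof
    fix v assume "v \<in> mat_kernel C"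
    from ker[OF this] have v: "v \<in> carrier_vec n" "M *\<^sub>v v = l \<cdot>\<^sub>v v" by auto
    obtain al be where ab: "al \<noteq> 0 \<or> be \<noteq> 0"
      and q: "(al \<cdot>\<^sub>v v + be \<cdot>\<^sub>v x0) \<bullet> (A *\<^sub>v (al \<cdot>\<^sub>v v + be \<cdot>\<^sub>v x0)) \<ge> 0"
      using K1 x0(1) v(1) by blast
    define z where "z = al \<cdot>\<^sub>v v + be \<cdot>\<^sub>v x0"
    have z: "z \<in> carrier_vec n" unfolding z_def using x0 v by simp
    have Mx0: "M *\<^sub>v x0 = l \<cdot>\<^sub>v x0" using ker[OF x0k] by simp
    have Mz: "M *\<^sub>v z = l \<cdot>\<^sub>v z"
      unfolding z_def mv_lin[OF M v(1) x0(1)] v(2) Mx0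
      by (rule eq_vecI) (use v x0 in \<open>auto simp: algebra_simps\<close>)
    have e: "l * (z \<bullet> (A *\<^sub>v z)) = (A *\<^sub>v z) \<bullet> (A *\<^sub>v z)"
      by (rule eig_quad[OF A B sA sk z]) (use Mz M_def in simp)
    have "(A *\<^sub>v z) \<bullet> (A *\<^sub>v z) \<ge> 0" by (rule self_scalar_nonneg)
    then have "l * (z \<bullet> (A *\<^sub>v z)) \<ge> 0" using e by simp
    then have "z \<bullet> (A *\<^sub>v z) \<le> 0" using l(2) by (simp add: zero_le_mult_iff)
    then have "z \<bullet> (A *\<^sub>v z) = 0" using q unfolding z_def by simp
    then have "(A *\<^sub>v z) \<bullet> (A *\<^sub>v z) = 0" using e by simp
    then have "A *\<^sub>v z = 0\<^sub>v n" using self_scalar_zero[of "A *\<^sub>v z" n] A z by simp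
    then have z0: "z = 0\<^sub>v n" using A_inj[OF A dA z] by simp
    have comp: "al * v $ i + be * x0 $ i = 0" if "i < n" for i
      using arg_cong[OF z0, of "\<lambda>w. w $ i"] that v x0 unfolding z_def by simp
    have al: "al \<noteq> 0"
    proof
      assume "al = 0"
      then have "be \<noteq> 0" using ab by simp
      then have "x0 = 0\<^sub>v n" using comp \<open>al = 0\<close> x0(1) by (intro eq_vecI) auto
      then show False using x0(2) by simp
    qed
    have "v = (- be / al) \<cdot>\<^sub>v x0"
    proof (rule eq_vecI)
      fix i assume "i < dim_vec ((- be / al) \<cdot>\<^sub>v x0)"
      then have i: "i < n" using x0 by simp
      show "v $ i = ((- be / al) \<cdot>\<^sub>v x0) $ i" using comp[OF i] al i x0 by (simp add: field_simps)
    qed (use v x0 in simp)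
    then show "\<exists>c. v = c \<cdot>\<^sub>v x0" by blast
  qed
  have "kernel_dim C = 1" by (rule kernel_dim_one[OF C x0k x0(2) dep])
  then show ?thesis unfolding geom_mult_def dim_gen_eigenspace_def M_def[symmetric] C_def[symmetric] C1 .
qed

theorem lemma4p4:
  fixes A B :: "real mat" and n :: nat
  assumes "A \<in> carrier_mat n n" and "B \<in> carrier_mat n n"
    and "transpose_mat A = A"
    and "det A \<noteq> 0"
    and "neg_eig_count A = 1"
    and "transpose_mat (A * B) = - (A * B)"
  shows "invertible_mat (A + B) \<and>
         (\<exists>!k. eigenvalue (A + B) k \<and> k < 0) \<and>
         (\<forall>k. eigenvalue (A + B) k \<and> k < 0 \<longrightarrow> geom_mult (A + B) k = 1)"
proof -
  note A = assms(1) and B = assms(2) and sA = assms(3) and dA = assms(4) and neg = assms(5) and sk = assms(6)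
  from index_one[OF A sA dA neg] have dneg: "det A < 0" and K1:
    "\<forall>x\<in>carrier_vec n. \<forall>y\<in>carrier_vec n. \<exists>a b. (a \<noteq> 0 \<or> b \<noteq> 0) \<and>
     (a \<cdot>\<^sub>v x + b \<cdot>\<^sub>v y) \<bullet> (A *\<^sub>v (a \<cdot>\<^sub>v x + b \<cdot>\<^sub>v y)) \<ge> 0" by auto
  have M: "A + B \<in> carrier_mat n n" using A B by simp
  have dM: "det (A + B) \<noteq> 0" by (rule nonsing[OF A B sA dA sk])
  have inv: "invertible_mat (A + B)"
  proof -
    from det_non_zero_imp_unit[OF M dM] obtain N where N: "N \<in> carrier_mat n n"
      and NM: "N * (A + B) = 1\<^sub>m n" and MN: "(A + B) * N = 1\<^sub>m n"
      unfolding Units_def ring_mat_def by auto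
    show ?thesis unfolding invertible_mat_def inverts_mat_def square_mat.simps
      using M N NM MN B by (auto intro!: exI[of _ N])
  qed
  have dMneg: "det (A + B) < 0" by (rule detM_neg[OF A B sA dA sk dneg])
  obtain k where k: "k < 0" "eigenvalue (A + B) k" using neg_eig_exists[OF M dMneg] by blast
  have ex1: "\<exists>!k. eigenvalue (A + B) k \<and> k < 0"
    using k uniq_neg[OF A B sA dA sk K1] by blast
  have gm: "\<forall>k. eigenvalue (A + B) k \<and> k < 0 \<longrightarrow> geom_mult (A + B) k = 1"
    using geom_one[OF A B sA dA sk K1] by blast
  show ?thesis using inv ex1 gm by blast
qed

end
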